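(* Let $I_3:=\bigcup_{i=0}^{3}L_i^{(9-i)}$ and $r:=\dot E/E+\tfrac{4}{3z}$, evaluated along solutions of the Boutroux–Painlevé system. For every $\epsilon>0$ there exists a neighbourhood $U$ of $I_3$ in $\mathcal S$ such that $|r|<\epsilon$ in $U$, for all $z\in\mathbb C\setminus\{0\}$. For every compact subset $K$ of $(L_4^{(5)}\setminus L_5^{(4)})\cup(L_7^{(2)}\setminus L_8^{(1)})$ there exist a neighbourhood $V$ of $K$ in $S_9$ and a constant $C>0$ such that $|3z\dot E/(4E)|\le C$ in $V$ for all $z\in\mathbb C\setminus\{0\}$.
   Context: Fix $\alpha\in\mathbb C$. Boutroux–Painlevé system: $\dot u=v-u^2-\tfrac12-\tfrac{u}{3z}$, $\dot v=2uv+\tfrac{2\alpha+1}{3z}-\tfrac{2v}{3z}$; energy $E=v^2/2-u^2v-v/2$, so that $\dot E=-\tfrac{4E}{3z}+\tfrac{4\alpha v-(2\alpha+1)(2u^2+1)}{6z}$, a rational function on the surface. Okamoto space: start from $\mathbb P^2(\mathbb C)$ with charts $(u,v)$, $(u_{01},v_{01})=(1/u,v/u)$, $(u_{02},v_{02})=(u/v,1/v)$; line at infinity $L_0$. Blowing up a point $(a,b)$ in a chart $(s,t)$ creates an exceptional line with charts $s=a+s_1t_1,\ t=b+t_1$ and $s=a+s_2,\ t=b+s_2t_2$. Nine blow-ups: $b_0:(u_{02},v_{02})=(0,0)\to L_1$; $b_1:(u_{12},v_{12})=(0,0)\to L_2$; $b_2:(u_{21},v_{21})=(1/2,0)\to L_3$;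 $b_3:(u_{31},v_{31})=(0,0)\to L_4$; $b_4:(u_{41},v_{41})=(-1/4,0)\to L_5$; $b_5:(u_{51},v_{51})=(\tfrac{1-2\alpha}{12z},0)\to L_6$; $b_6:(u_{01},v_{01})=(0,0)\to L_7$; $b_7:(u_{72},v_{72})=(0,0)\to L_8$; $b_8:(u_{82},v_{82})=(0,-\tfrac{1+2\alpha}{3z})\to L_9$, where blowing up produces charts $(u_{i1},v_{i1})$ (first type) and $(u_{i2},v_{i2})$ (second type) with $i$ the index of the new line. This gives $S_9(z)$; $L_i^{(9-i)}$ is the proper transform of $L_i$. $\mathcal S$ is the bundle of the surfaces $S_9(z)$ over $z\in\mathbb C\setminus\{0\}$. *)

theory Defs
  imports "HOL-Analysis.Analysis"
begin

definition BP_E :: "complex \<Rightarrow> complex \<Rightarrow> complex" where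
  "BP_E u v = v^2/2 - u^2 * v - v/2"

definition BP_udot :: "complex \<Rightarrow> complex \<Rightarrow> complex \<Rightarrow> complex" where
  "BP_udot z u v = v - u^2 - 1/2 - u/(3*z)"

definition BP_vdot :: "complex \<Rightarrow> complex \<Rightarrow> complex \<Rightarrow> complex \<Rightarrow> complex" where
  "BP_vdot \<alpha> z u v = 2* u* v + (2*\<alpha>+1)/(3*z) - 2* v/(3*z)"

text \<open>Derivative of E along solutions (chain rule: E_u = -2uv, E_v = v - u^2 - 1/2).\<close>
definition BP_Edot :: "complex \<Rightarrow> complex \<Rightarrow> complex \<Rightarrow> complex \<Rightarrow> complex" where
  "BP_Edot \<alpha> z u v = (-2* u* v) * BP_udot z u v + (v - u^2 - 1/2) * BP_vdot \<alpha> z u v"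

definition BP_r :: "complex \<Rightarrow> complex \<Rightarrow> complex \<Rightarrow> complex \<Rightarrow> complex" where
  "BP_r \<alpha> z u v = BP_Edot \<alpha> z u v / BP_E u v + 4/(3*z)"

text \<open>Blow-up of the point (a,b): first-type chart s = a + s1 t1, t = b + t1;
  second-type chart s = a + s2, t = b + s2 t2.\<close>
fun bu1 :: "complex \<times> complex \<Rightarrow> complex \<times> complex \<Rightarrow> complex \<times> complex" where
  "bu1 (a,b) (s,t) = (a + s*t, b + t)"
fun bu2 :: "complex \<times> complex \<Rightarrow> complex \<times> complex \<Rightarrow> complex \<times> complex" where
  "bu2 (a,b) (s,t) = (a + s, b + s*t)"

text \<open>From the charts (u01,v01) = (1/u, v/u) and (u02,v02) = (u/v, 1/v) to the
  affine chart (u,v); None means the point lies on the line at infinity / exceptional lines.\<close>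
fun aff01 :: "complex \<times> complex \<Rightarrow> (complex \<times> complex) option" where
  "aff01 (a,b) = (if a = 0 then None else Some (1/a, b/a))"
fun aff02 :: "complex \<times> complex \<Rightarrow> (complex \<times> complex) option" where
  "aff02 (a,b) = (if b = 0 then None else Some (a/b, 1/b))"

datatype okchart = C01 | C71 | C11 | C21 | C22 | C31 | C32 | C41 | C42

text \<open>Coordinate map of each chart down to the affine (u,v)-chart.
  b0: (u02,v02)=(0,0); b1: (u12,v12)=(0,0); b2: (u21,v21)=(1/2,0);
  b3: (u31,v31)=(0,0); b6: (u01,v01)=(0,0).\<close>
definition to02_21 :: "complex \<times> complex \<Rightarrow> complex \<times> complex" where
  "to02_21 p = bu2 (0,0) (bu1 (0,0) p)"
definition to02_31 :: "complex \<times> complex \<Rightarrow> complex \<times> complex" where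
  "to02_31 p = to02_21 (bu1 (1/2,0) p)"

fun to02 :: "okchart \<Rightarrow> complex \<times> complex \<Rightarrow> complex \<times> complex" where
  "to02 C11 p = bu1 (0,0) p"
| "to02 C21 p = to02_21 p"
| "to02 C22 p = bu2 (0,0) (bu2 (0,0) p)"
| "to02 C31 p = to02_31 p"
| "to02 C32 p = to02_21 (bu2 (1/2,0) p)"
| "to02 C41 p = to02_31 (bu1 (0,0) p)"
| "to02 C42 p = to02_31 (bu2 (0,0) p)"
| "to02 _ p = p"

fun chart_uv :: "okchart \<Rightarrow> complex \<times> complex \<Rightarrow> (complex \<times> complex) option" where
  "chart_uv C01 p = aff01 p"
| "chart_uv C71 p = aff01 (bu1 (0,0) p)"
| "chart_uv c p = aff02 (to02 c p)"

text \<open>Domain of each chart inside S_9(z): the chart plane minus the centre of a later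
  blow-up lying in it (b6 in chart 01, b2 in charts 21/22, b3 in chart 31,
  b4 in charts 41/42; all other centres are not in these charts).\<close>
fun okdom :: "okchart \<Rightarrow> (complex \<times> complex) set" where
  "okdom C01 = - {(0,0)}"
| "okdom C21 = - {(1/2,0)}"
| "okdom C22 = - {(0,2)}"
| "okdom C31 = - {(0,0)}"
| "okdom C41 = - {(-1/4,0)}"
| "okdom C42 = - {(0,-4)}"
| "okdom _ = UNIV"

text \<open>I_3 = L_0^(9) u L_1^(8) u L_2^(7) u L_3^(6), described chart by chart
  (the pieces cover I_3 and each lies in I_3).\<close>
fun I3_piece :: "okchart \<Rightarrow> (complex \<times> complex) set" where
  "I3_piece C01 = {(0,w) | w. w \<noteq> 0}"                        \<comment> \<open>L0\<close>
| "I3_piece C71 = {(0,w) | w. True}"                            \<comment> \<open>L0\<close>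
| "I3_piece C11 = {(w,0) | w. True}"                            \<comment> \<open>L1\<close>
| "I3_piece C21 = {(0,w) | w. True} \<union> {(w,0) | w. w \<noteq> 1/2}"   \<comment> \<open>L1, L2\<close>
| "I3_piece C22 = {(w,0) | w. True} \<union> {(0,w) | w. w \<noteq> 2}"     \<comment> \<open>L0, L2\<close>
| "I3_piece C31 = {(w,0) | w. w \<noteq> 0}"                        \<comment> \<open>L3\<close>
| "I3_piece C32 = {(w,0) | w. True} \<union> {(0,w) | w. True}"       \<comment> \<open>L2, L3\<close>
| "I3_piece C42 = {(w,0) | w. True}"                            \<comment> \<open>L3\<close>
| "I3_piece C41 = {}"

definition gen_pts :: "okchart \<Rightarrow> (complex \<times> complex) set \<Rightarrow> (complex \<times> complex) set" where
  "gen_pts c S = {uv. \<exists>p\<in>S. chart_uv c p = Some uv \<and> BP_E (fst uv) (snd uv) \<noteq> 0}"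

end

theory Submission
  imports Defs
begin

definition NN :: "complex \<Rightarrow> complex \<Rightarrow> complex \<Rightarrow> complex" where
  "NN \<alpha> u v = 4 * \<alpha> * v - (2 * \<alpha> + 1) * (2 * u^2 + 1)"

lemma Edot_eq:
  assumes "z \<noteq> 0"
  shows "BP_Edot \<alpha> z u v = -4 * BP_E u v / (3 * z) + NN \<alpha> u v / (6 * z)"
  using assms by (simp add: BP_Edot_def BP_E_def NN_def BP_udot_def BP_vdot_def field_simps) algebra?

lemma r_eq:
  assumes "z \<noteq> 0" "BP_E u v \<noteq> 0"
  shows "BP_r \<alpha> z u v = NN \<alpha> u v / (6 * z * BP_E u v)"
  using assms by (simp add: BP_r_def Edot_eq field_simps)

lemma q_eq:
  assumes "z \<noteq> 0" "BP_E u v \<noteq> 0"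
  shows "3 * z * BP_Edot \<alpha> z u v / (4 * BP_E u v) = -1 + NN \<alpha> u v / (8 * BP_E u v)"
  using assms by (simp add: Edot_eq field_simps)

fun gg' :: "okchart \<Rightarrow> complex \<Rightarrow> complex \<Rightarrow> complex" where
  "gg' C01 s t = t^2 * s / 2 - t - s^2 * t / 2"
| "gg' C71 s t = s * t^2 / 2 - 1 - s^2 * t^2 / 2"
| "gg' C11 s t = 1 / 2 - s^2 * t - t / 2"
| "gg' C21 s t = 1 / 2 - s - s * t^2 / 2"
| "gg' C22 s t = t / 2 - 1 - s^2 * t^2 / 2"
| "gg' C31 s t = -s - (1 / 2 + s * t) * t / 2"
| "gg' C32 s t = -1 - (1 / 2 + s) * s * t^2 / 2"
| "gg' C41 s t = -(s + (1 / 2 + s * t^2) / 2)"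
| "gg' C42 s t = -(1 + (1 / 2 + s^2 * t) * t / 2)"

fun ff' :: "complex \<Rightarrow> okchart \<Rightarrow> complex \<Rightarrow> complex \<Rightarrow> complex" where
  "ff' a C01 s t = 4 * a * t * s^2 - (2 * a + 1) * (2 * s + s^3)"
| "ff' a C71 s t = 4 * a * s^2 * t^2 - (2 * a + 1) * (2 * s + s^3 * t^2)"
| "ff' a C11 s t = 4 * a * t - (2 * a + 1) * (2 * s^2 + 1) * t^2"
| "ff' a C21 s t = 4 * a * s * t^2 - (2 * a + 1) * (2 * s^2 * t^2 + s^2 * t^4)"
| "ff' a C22 s t = 4 * a * s^2 * t^2 - (2 * a + 1) * (2 * s^2 * t + s^4 * t^3)"
| "ff' a C31 s t = 4 * a * (1 / 2 + s * t) * t - (2 * a + 1) * (2 * (1 / 2 + s * t)^2 * t + (1 / 2 + s * t)^2 * t^3)"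
| "ff' a C32 s t = 4 * a * (1 / 2 + s) * s * t^2 - (2 * a + 1) * (2 * (1 / 2 + s)^2 * s * t^2 + (1 / 2 + s)^2 * s^3 * t^4)"
| "ff' a C41 s t = 4 * a * (1 / 2 + s * t^2) - (2 * a + 1) * (2 * (1 / 2 + s * t^2)^2 + (1 / 2 + s * t^2)^2 * t^2)"
| "ff' a C42 s t = t * (4 * a * (1 / 2 + s^2 * t) - (2 * a + 1) * (2 * (1 / 2 + s^2 * t)^2 + (1 / 2 + s^2 * t)^2 * s^2 * t^2))"

lemma chart_C01:
  assumes a: "chart_uv C01 (s,t) = Some (u,v)"
  shows "s \<noteq> 0 \<and> u = 1 / s \<and> v = t / s"
proof -
  have 1: "s \<noteq> 0 \<and> u = 1 / (s) \<and> v = t / (s)"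
    using a  by (simp add:  split: if_splits)
  then show ?thesis by (auto simp: field_simps power2_eq_square power3_eq_cube)
qed

lemma m_C01:
  assumes a: "chart_uv C01 (s,t) = Some (u,v)"
  shows "\<exists>m. m \<noteq> 0 \<and> gg' C01 s t = BP_E u v * m \<and> ff' aa C01 s t = NN aa u v * m"
proof -
  
  
  have h: "s \<noteq> 0" "u = 1 / s" "v = t / s" using chart_C01[OF a ] by auto
  show ?thesis
    unfolding ff'.simps gg'.simps 
    apply (rule exI[of _ "s^3"])
    apply (simp only: h(2,3))
    apply (simp add: h(1) BP_E_def NN_def field_simps)
    by algebra?
qed

lemma chart_C71:
  assumes a: "chart_uv C71 (s,t) = Some (u,v)"
  shows "s \<noteq> 0 \<and> t \<noteq> 0 \<and> u = 1 / (s * t) \<and> v = 1 / s"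
proof -
  have 1: "s * t \<noteq> 0 \<and> u = 1 / (s * t) \<and> v = t / (s * t)"
    using a  by (simp add:  split: if_splits)
  then show ?thesis by (auto simp: field_simps power2_eq_square power3_eq_cube)
qed

lemma m_C71:
  assumes a: "chart_uv C71 (s,t) = Some (u,v)"
  shows "\<exists>m. m \<noteq> 0 \<and> gg' C71 s t = BP_E u v * m \<and> ff' aa C71 s t = NN aa u v * m"
proof -
  
  
  have h: "s \<noteq> 0 \<and> t \<noteq> 0" "u = 1 / (s * t)" "v = 1 / s" using chart_C71[OF a ] by auto
  show ?thesis
    unfolding ff'.simps gg'.simps 
    apply (rule exI[of _ "s^3 * t^2"])
    apply (simp only: h(2,3))
    apply (simp add: h(1) BP_E_def NN_def field_simps)
    by algebra?
qed

lemma chart_C11: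
  assumes a: "chart_uv C11 (s,t) = Some (u,v)"
  shows "t \<noteq> 0 \<and> u = s \<and> v = 1 / t"
proof -
  have 1: "t \<noteq> 0 \<and> u = (s * t) / (t) \<and> v = 1 / (t)"
    using a  by (simp add:  split: if_splits)
  then show ?thesis by (auto simp: field_simps power2_eq_square power3_eq_cube)
qed

lemma m_C11:
  assumes a: "chart_uv C11 (s,t) = Some (u,v)"
  shows "\<exists>m. m \<noteq> 0 \<and> gg' C11 s t = BP_E u v * m \<and> ff' aa C11 s t = NN aa u v * m"
proof -
  
  
  have h: "t \<noteq> 0" "u = s" "v = 1 / t" using chart_C11[OF a ] by auto
  show ?thesis
    unfolding ff'.simps gg'.simps 
    apply (rule exI[of _ "t^2"])
    apply (simp only: h(2,3))
    apply (simp add: h(1) BP_E_def NN_def field_simps)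
    by algebra?
qed

lemma chart_C21:
  assumes a: "chart_uv C21 (s,t) = Some (u,v)"
  shows "s \<noteq> 0 \<and> t \<noteq> 0 \<and> u = 1 / t \<and> v = 1 / (s * t^2)"
proof -
  have 1: "s * t * t \<noteq> 0 \<and> u = (s * t) / (s * t * t) \<and> v = 1 / (s * t * t)"
    using a  by (simp add: to02_21_def split: if_splits)
  then show ?thesis by (auto simp: field_simps power2_eq_square power3_eq_cube)
qed

lemma m_C21:
  assumes a: "chart_uv C21 (s,t) = Some (u,v)"
  shows "\<exists>m. m \<noteq> 0 \<and> gg' C21 s t = BP_E u v * m \<and> ff' aa C21 s t = NN aa u v * m"
proof -
  
  
  have h: "s \<noteq> 0 \<and> t \<noteq> 0" "u = 1 / t" "v = 1 / (s * t^2)" using chart_C21[OF a ] by auto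
  show ?thesis
    unfolding ff'.simps gg'.simps 
    apply (rule exI[of _ "s^2 * t^4"])
    apply (simp only: h(2,3))
    apply (simp add: h(1) BP_E_def NN_def field_simps)
    by algebra?
qed

lemma chart_C22:
  assumes a: "chart_uv C22 (s,t) = Some (u,v)"
  shows "s \<noteq> 0 \<and> t \<noteq> 0 \<and> u = 1 / (s * t) \<and> v = 1 / (s^2 * t)"
proof -
  have 1: "s * (s * t) \<noteq> 0 \<and> u = (s) / (s * (s * t)) \<and> v = 1 / (s * (s * t))"
    using a  by (simp add:  split: if_splits)
  then show ?thesis by (auto simp: field_simps power2_eq_square power3_eq_cube)
qed

lemma m_C22:
  assumes a: "chart_uv C22 (s,t) = Some (u,v)"
  shows "\<exists>m. m \<noteq> 0 \<and> gg' C22 s t = BP_E u v * m \<and> ff' aa C22 s t = NN aa u v * m"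
proof -
  
  
  have h: "s \<noteq> 0 \<and> t \<noteq> 0" "u = 1 / (s * t)" "v = 1 / (s^2 * t)" using chart_C22[OF a ] by auto
  show ?thesis
    unfolding ff'.simps gg'.simps 
    apply (rule exI[of _ "s^4 * t^3"])
    apply (simp only: h(2,3))
    apply (simp add: h(1) BP_E_def NN_def field_simps)
    by algebra?
qed

lemma chart_C31:
  assumes a: "chart_uv C31 (s,t) = Some (u,v)"
    and S: "S = 1 / 2+s * t"
  shows "S \<noteq> 0 \<and> t \<noteq> 0 \<and> u = 1 / t \<and> v = 1 / (S * t^2)"
proof -
  have S2: "1 / 2+s * t = S" using S by (simp add: power2_eq_square mult.assoc)
  have 1: "S * t * t \<noteq> 0 \<and> u = (S * t) / (S * t * t) \<and> v = 1 / (S * t * t)"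
    using a S2 by (simp add: to02_31_def to02_21_def split: if_splits)
  then show ?thesis by (auto simp: field_simps power2_eq_square power3_eq_cube)
qed

lemma m_C31:
  assumes a: "chart_uv C31 (s,t) = Some (u,v)"
  shows "\<exists>m. m \<noteq> 0 \<and> gg' C31 s t = BP_E u v * m \<and> ff' aa C31 s t = NN aa u v * m"
proof -
  define S where "S = 1 / 2+s * t"
  have SS: "2 * S = 1 + 2 * (s * t)" by (simp add: S_def field_simps)
  have h: "S \<noteq> 0 \<and> t \<noteq> 0" "u = 1 / t" "v = 1 / (S * t^2)" using chart_C31[OF a S_def] by auto
  show ?thesis
    unfolding ff'.simps gg'.simps S_def[symmetric]
    apply (rule exI[of _ "S^2 * t^3"])
    apply (simp only: h(2,3))
    apply (simp add: h(1) BP_E_def NN_def field_simps)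
    apply (rule conjI)
    subgoal by ((simp add: algebra_simps power2_eq_square power3_eq_cube; fail) | (simp add: algebra_simps power_numeral_reduce; fail) | (use SS in algebra))
    subgoal by ((simp add: algebra_simps power2_eq_square power3_eq_cube; fail) | (simp add: algebra_simps power_numeral_reduce; fail) | (use SS in algebra))
    done
qed

lemma chart_C32:
  assumes a: "chart_uv C32 (s,t) = Some (u,v)"
    and S: "S = 1 / 2+s"
  shows "S \<noteq> 0 \<and> s \<noteq> 0 \<and> t \<noteq> 0 \<and> u = 1 / (s * t) \<and> v = 1 / (S * s^2 * t^2)"
proof -
  have S2: "1 / 2+s = S" using S by (simp add: power2_eq_square mult.assoc)
  have 1: "S * (s * t) * (s * t) \<noteq> 0 \<and> u = (S * (s * t)) / (S * (s * t) * (s * t)) \<and> v = 1 / (S * (s * t) * (s * t))"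
    using a S2 by (simp add: to02_21_def split: if_splits)
  then show ?thesis by (auto simp: field_simps power2_eq_square power3_eq_cube)
qed

lemma m_C32:
  assumes a: "chart_uv C32 (s,t) = Some (u,v)"
  shows "\<exists>m. m \<noteq> 0 \<and> gg' C32 s t = BP_E u v * m \<and> ff' aa C32 s t = NN aa u v * m"
proof -
  define S where "S = 1 / 2+s"
  have SS: "2 * S = 1 + 2 * (s)" by (simp add: S_def field_simps)
  have h: "S \<noteq> 0 \<and> s \<noteq> 0 \<and> t \<noteq> 0" "u = 1 / (s * t)" "v = 1 / (S * s^2 * t^2)" using chart_C32[OF a S_def] by auto
  show ?thesis
    unfolding ff'.simps gg'.simps S_def[symmetric]
    apply (rule exI[of _ "S^2 * s^3 * t^4"])
    apply (simp only: h(2,3))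
    apply (simp add: h(1) BP_E_def NN_def field_simps)
    apply (rule conjI)
    subgoal by ((simp add: algebra_simps power2_eq_square power3_eq_cube; fail) | (simp add: algebra_simps power_numeral_reduce; fail) | (use SS in algebra))
    subgoal by ((simp add: algebra_simps power2_eq_square power3_eq_cube; fail) | (simp add: algebra_simps power_numeral_reduce; fail) | (use SS in algebra))
    done
qed

lemma chart_C41:
  assumes a: "chart_uv C41 (s,t) = Some (u,v)"
    and S: "S = 1 / 2+s * t^2"
  shows "S \<noteq> 0 \<and> t \<noteq> 0 \<and> u = 1 / t \<and> v = 1 / (S * t^2)"
proof -
  have S2: "1 / 2+s * t * t = S" using S by (simp add: power2_eq_square mult.assoc)
  have 1: "S * t * t \<noteq> 0 \<and> u = (S * t) / (S * t * t) \<and> v = 1 / (S * t * t)"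
    using a S2 by (simp add: to02_31_def to02_21_def split: if_splits)
  then show ?thesis by (auto simp: field_simps power2_eq_square power3_eq_cube)
qed

lemma m_C41:
  assumes a: "chart_uv C41 (s,t) = Some (u,v)"
  shows "\<exists>m. m \<noteq> 0 \<and> gg' C41 s t = BP_E u v * m \<and> ff' aa C41 s t = NN aa u v * m"
proof -
  define S where "S = 1 / 2+s * t^2"
  have SS: "2 * S = 1 + 2 * (s * t^2)" by (simp add: S_def field_simps)
  have h: "S \<noteq> 0 \<and> t \<noteq> 0" "u = 1 / t" "v = 1 / (S * t^2)" using chart_C41[OF a S_def] by auto
  show ?thesis
    unfolding ff'.simps gg'.simps S_def[symmetric]
    apply (rule exI[of _ "S^2 * t^2"])
    apply (simp only: h(2,3))
    apply (simp add: h(1) BP_E_def NN_def field_simps)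
    apply (rule conjI)
    subgoal by ((simp add: algebra_simps power2_eq_square power3_eq_cube; fail) | (simp add: algebra_simps power_numeral_reduce; fail) | (use SS in algebra))
    subgoal by ((simp add: algebra_simps power2_eq_square power3_eq_cube; fail) | (simp add: algebra_simps power_numeral_reduce; fail) | (use SS in algebra))
    done
qed

lemma chart_C42:
  assumes a: "chart_uv C42 (s,t) = Some (u,v)"
    and S: "S = 1 / 2+s^2 * t"
  shows "S \<noteq> 0 \<and> s \<noteq> 0 \<and> t \<noteq> 0 \<and> u = 1 / (s * t) \<and> v = 1 / (S * s^2 * t^2)"
proof -
  have S2: "1 / 2+s * (s * t) = S" using S by (simp add: power2_eq_square mult.assoc)
  have 1: "S * (s * t) * (s * t) \<noteq> 0 \<and> u = (S * (s * t)) / (S * (s * t) * (s * t)) \<and> v = 1 / (S * (s * t) * (s * t))"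
    using a S2 by (simp add: to02_31_def to02_21_def split: if_splits)
  then show ?thesis by (auto simp: field_simps power2_eq_square power3_eq_cube)
qed

lemma m_C42:
  assumes a: "chart_uv C42 (s,t) = Some (u,v)"
  shows "\<exists>m. m \<noteq> 0 \<and> gg' C42 s t = BP_E u v * m \<and> ff' aa C42 s t = NN aa u v * m"
proof -
  define S where "S = 1 / 2+s^2 * t"
  have SS: "2 * S = 1 + 2 * (s^2 * t)" by (simp add: S_def field_simps)
  have h: "S \<noteq> 0 \<and> s \<noteq> 0 \<and> t \<noteq> 0" "u = 1 / (s * t)" "v = 1 / (S * s^2 * t^2)" using chart_C42[OF a S_def] by auto
  show ?thesis
    unfolding ff'.simps gg'.simps S_def[symmetric]
    apply (rule exI[of _ "S^2 * s^2 * t^3"])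
    apply (simp only: h(2,3))
    apply (simp add: h(1) BP_E_def NN_def field_simps)
    apply (rule conjI)
    subgoal by ((simp add: algebra_simps power2_eq_square power3_eq_cube; fail) | (simp add: algebra_simps power_numeral_reduce; fail) | (use SS in algebra))
    subgoal by ((simp add: algebra_simps power2_eq_square power3_eq_cube; fail) | (simp add: algebra_simps power_numeral_reduce; fail) | (use SS in algebra))
    done
qed


lemma m_all:
  assumes "chart_uv c (s,t) = Some (u,v)"
  shows "\<exists>m. m \<noteq> 0 \<and> gg' c s t = BP_E u v * m \<and> ff' aa c s t = NN aa u v * m"
  using assms m_C01 m_C71 m_C11 m_C21 m_C22 m_C31 m_C32 m_C41 m_C42 by (cases c) auto

definition gg :: "okchart \<Rightarrow> complex \<times> complex \<Rightarrow> complex" where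
  "gg c p = gg' c (fst p) (snd p)"
definition ff :: "complex \<Rightarrow> okchart \<Rightarrow> complex \<times> complex \<Rightarrow> complex" where
  "ff a c p = ff' a c (fst p) (snd p)"

lemma key:
  assumes "chart_uv c p = Some (u,v)" "BP_E u v \<noteq> 0"
  shows "gg c p \<noteq> 0 \<and> ff a c p / gg c p = NN a u v / BP_E u v"
proof -
  obtain s t where p: "p = (s,t)" by (cases p)
  obtain m where m: "m \<noteq> 0" "gg' c s t = BP_E u v * m" "ff' a c s t = NN a u v * m"
    using m_all[of c s t u v a] assms(1) p by auto
  show ?thesis using m assms(2) by (simp add: gg_def ff_def p)
qed

lemma cont_gg: "continuous_on UNIV (gg c)"
  unfolding gg_def by (cases c) (simp_all add: continuous_intros)

lemma cont_ff: "continuous_on UNIV (ff a c)"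
  unfolding ff_def by (cases c) (simp_all add: continuous_intros)

lemma open_okdom: "open (okdom c)"
  by (cases c) (simp_all add: open_Compl)

lemma I3_prop:
  assumes "c \<noteq> C41" "p \<in> I3_piece c"
  shows "p \<in> okdom c \<and> ff a c p = 0 \<and> gg c p \<noteq> 0"
  using assms by (cases c) (auto simp: ff_def gg_def)

lemma open_U:
  "open {x. x \<in> okdom c \<times> (- {0}) \<and> cmod (ff a c (fst x)) < e * (6 * cmod (snd x) * cmod (gg c (fst x)))}"
proof -
  have "open {x. cmod (ff a c (fst x)) < e * (6 * cmod (snd x) * cmod (gg c (fst x)))}"
    by (rule open_Collect_less) (intro continuous_intros continuous_on_compose2[OF cont_ff] continuous_on_compose2[OF cont_gg]; simp)+
  moreover have "open (okdom c \<times> (- {0::complex}))" by (intro open_Times open_okdom) (simp add: open_Compl)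
  ultimately show ?thesis by (simp add: Collect_conj_eq open_Int)
qed

lemma open_V:
  "open {p. p \<in> okdom c \<and> cmod (ff a c p) < M * cmod (gg c p)}"
proof -
  have "open {p. cmod (ff a c p) < M * cmod (gg c p)}"
    by (rule open_Collect_less) (intro continuous_intros cont_ff cont_gg)+
  then show ?thesis using open_okdom by (simp add: Collect_conj_eq open_Int)
qed

lemma nbhd_bound:
  fixes F G :: "complex \<times> complex \<Rightarrow> complex"
  assumes "compact K" "continuous_on UNIV F" "continuous_on UNIV G" "\<forall>p\<in>K. G p \<noteq> 0"
  shows "\<exists>M>0. \<forall>p\<in>K. cmod (F p) < M * cmod (G p)"
proof -
  have "continuous_on K (\<lambda>p. F p / G p)"
    using assms by (intro continuous_on_divide) (auto intro: continuous_on_subset)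
  then have "compact ((\<lambda>p. F p / G p) ` K)" using assms(1) by (rule compact_continuous_image)
  then obtain B0 where B0: "\<forall>x\<in>(\<lambda>p. F p / G p) ` K. norm x \<le> B0"
    using compact_imp_bounded bounded_iff by blast
  have B: "\<forall>p\<in>K. cmod (F p / G p) \<le> B0" using B0 by auto
  define B where "B = B0"
  from B have B: "\<forall>p\<in>K. cmod (F p / G p) \<le> B" unfolding B_def .
  show ?thesis
  proof (intro exI[of _ "max B 0 + 1"] conjI ballI)
    fix p assume p: "p \<in> K"
    have g: "cmod (G p) > 0" using assms(4) p by auto
    have "cmod (F p) = cmod (F p / G p) * cmod (G p)" using g by (simp add: norm_divide)
    also have "\<dots> \<le> B * cmod (G p)" using B p g by (intro mult_right_mono) auto
    also have "\<dots> < (max B 0 + 1) * cmod (G p)" using g by (intro mult_strict_right_mono) auto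
    finally show "cmod (F p) < (max B 0 + 1) * cmod (G p)" .
  qed simp
qed


lemma part1:
  fixes \<alpha> :: complex
  assumes e: "\<epsilon> > 0"
  shows "\<exists>U :: okchart \<Rightarrow> ((complex \<times> complex) \<times> complex) set.
      (\<forall>c. open (U c) \<and> U c \<subseteq> okdom c \<times> (- {0}) \<and> I3_piece c \<times> (- {0}) \<subseteq> U c) \<and>
      (\<forall>c p z u v. (p, z) \<in> U c \<longrightarrow> chart_uv c p = Some (u, v) \<longrightarrow> BP_E u v \<noteq> 0 \<longrightarrow>
          cmod (BP_r \<alpha> z u v) < \<epsilon>)"
proof -
  define U where "U c = (if c = C41 then {} else
     {x. x \<in> okdom c \<times> (- {0}) \<and> cmod (ff \<alpha> c (fst x)) < \<epsilon> * (6 * cmod (snd x) * cmod (gg c (fst x)))})" for c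
  have A: "open (U c) \<and> U c \<subseteq> okdom c \<times> (- {0}) \<and> I3_piece c \<times> (- {0}) \<subseteq> U c" for c
  proof (cases "c = C41")
    case True then show ?thesis by (simp add: U_def)
  next
    case False
    have "I3_piece c \<times> (- {0}) \<subseteq> U c"
    proof
      fix x assume x: "x \<in> I3_piece c \<times> (- {0::complex})"
      then have h: "fst x \<in> okdom c \<and> ff \<alpha> c (fst x) = 0 \<and> gg c (fst x) \<noteq> 0"
        using I3_prop[OF False] by auto
      then show "x \<in> U c" using x e False by (auto simp: U_def mem_Times_iff)
    qed
    then show ?thesis using False open_U[of c \<alpha> \<epsilon>] by (auto simp: U_def)
  qed
  have B: "cmod (BP_r \<alpha> z u v) < \<epsilon>"
    if x: "(p, z) \<in> U c" and ch: "chart_uv c p = Some (u, v)" and E: "BP_E u v \<noteq> 0" for c p z u v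
  proof -
    have c: "c \<noteq> C41" using x by (auto simp: U_def)
    have z: "z \<noteq> 0" and ineq: "cmod (ff \<alpha> c p) < \<epsilon> * (6 * cmod z * cmod (gg c p))"
      using x c by (auto simp: U_def)
    from key[OF ch E, of \<alpha>] have g: "gg c p \<noteq> 0" and q: "ff \<alpha> c p / gg c p = NN \<alpha> u v / BP_E u v"
      by auto
    have "BP_r \<alpha> z u v = NN \<alpha> u v / BP_E u v / (6 * z)" using r_eq[OF z E] by simp
    also have "\<dots> = ff \<alpha> c p / gg c p / (6 * z)" using q by simp
    also have "\<dots> = ff \<alpha> c p / (6 * z * gg c p)" by (simp add: divide_divide_eq_left mult.commute)
    finally have "cmod (BP_r \<alpha> z u v) = cmod (ff \<alpha> c p) / (6 * cmod z * cmod (gg c p))"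
      by (simp add: norm_divide norm_mult)
    also have "\<dots> < \<epsilon>" using ineq z g by (simp add: divide_less_eq)
    finally show ?thesis .
  qed
  show ?thesis using A B by blast
qed


lemma gen_bound:
  assumes M: "M > 0" and z: "z \<noteq> 0"
    and uv: "(u,v) \<in> gen_pts c {p. p \<in> okdom c \<and> cmod (ff \<alpha> c p) < M * cmod (gg c p)}"
  shows "cmod (3*z*BP_Edot \<alpha> z u v / (4 * BP_E u v)) \<le> 1 + M/8"
proof -
  obtain p where p: "cmod (ff \<alpha> c p) < M * cmod (gg c p)" "chart_uv c p = Some (u,v)" "BP_E u v \<noteq> 0"
    using uv by (auto simp: gen_pts_def)
  from key[OF p(2,3), of \<alpha>] have g: "gg c p \<noteq> 0" and q: "ff \<alpha> c p / gg c p = NN \<alpha> u v / BP_E u v"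
    by auto
  have "3*z*BP_Edot \<alpha> z u v / (4 * BP_E u v) = -1 + NN \<alpha> u v / BP_E u v / 8"
    using q_eq[OF z p(3)] by simp
  also have "\<dots> = -1 + ff \<alpha> c p / gg c p / 8" using q by simp
  finally have eq: "3*z*BP_Edot \<alpha> z u v / (4 * BP_E u v) = -1 + ff \<alpha> c p / gg c p / 8" .
  have r: "cmod (ff \<alpha> c p / gg c p) \<le> M"
    using p(1) g by (simp add: norm_divide divide_le_eq)
  have "cmod (-1 + ff \<alpha> c p / gg c p / 8) \<le> cmod (-1::complex) + cmod (ff \<alpha> c p / gg c p / 8)"
    by (rule norm_triangle_ineq)
  also have "\<dots> \<le> 1 + M/8" using r by (simp add: norm_divide)
  finally show ?thesis using eq by simp
qed

lemma part2:
  fixes \<alpha> :: complex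
  assumes "compact K41 \<and> K41 \<subseteq> - {-1/4} \<and> compact K42 \<and> K42 \<subseteq> - {-4} \<and> compact K71"
  shows "\<exists>V41 V42 V71 (C::real).
          open V41 \<and> V41 \<subseteq> okdom C41 \<and> {(w,0) | w. w \<in> K41} \<subseteq> V41 \<and>
          open V42 \<and> V42 \<subseteq> okdom C42 \<and> {(0,w) | w. w \<in> K42} \<subseteq> V42 \<and>
          open V71 \<and> V71 \<subseteq> okdom C71 \<and> {(w,0) | w. w \<in> K71} \<subseteq> V71 \<and>
          C > 0 \<and>
          (\<forall>z. z \<noteq> 0 \<longrightarrow>
             (\<forall>(u,v) \<in> gen_pts C41 V41 \<union> gen_pts C42 V42 \<union> gen_pts C71 V71.
                cmod (3*z*BP_Edot \<alpha> z u v / (4 * BP_E u v)) \<le> C))"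
proof -
  have k: "compact K41" "K41 \<subseteq> - {-1/4}" "compact K42" "K42 \<subseteq> - {-4}" "compact K71" using assms by auto
  have ce1: "continuous_on UNIV (\<lambda>w::complex. (w, 0::complex))" by (intro continuous_intros)
  have ce2: "continuous_on UNIV (\<lambda>w::complex. (0::complex, w))" by (intro continuous_intros)
  have c1: "compact ((\<lambda>w. (w, 0::complex)) ` K41)" by (rule compact_continuous_image[OF continuous_on_subset[OF ce1] k(1)]) simp
  have c2: "compact ((\<lambda>w. (0::complex, w)) ` K42)" by (rule compact_continuous_image[OF continuous_on_subset[OF ce2] k(3)]) simp
  have c3: "compact ((\<lambda>w. (w, 0::complex)) ` K71)" by (rule compact_continuous_image[OF continuous_on_subset[OF ce1] k(5)]) simp
  have g1: "\<forall>p\<in>(\<lambda>w. (w, 0::complex)) ` K41. gg C41 p \<noteq> 0"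
  proof
    fix p assume "p \<in> (\<lambda>w. (w, 0::complex)) ` K41"
    then obtain w where w: "p = (w,0)" "w \<noteq> -1/4" using k(2) by auto
    show "gg C41 p \<noteq> 0"
    proof
      assume "gg C41 p = 0"
      then have "1 + w * 4 = 0" using w by (simp add: gg_def field_simps)
      then have "w * 4 = -1" by (simp add: add_eq_0_iff)
      then have "w = -1/4" by (simp add: field_simps)
      with w show False by simp
    qed
  qed
  have g2: "\<forall>p\<in>(\<lambda>w. (0::complex, w)) ` K42. gg C42 p \<noteq> 0"
  proof
    fix p assume "p \<in> (\<lambda>w. (0::complex, w)) ` K42"
    then obtain w where w: "p = (0,w)" "w \<noteq> -4" using k(4) by auto
    show "gg C42 p \<noteq> 0"
    proof
      assume "gg C42 p = 0"
      then have "4 + w = 0" using w by (simp add: gg_def field_simps)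
      then have "w = -4" by (simp add: add_eq_0_iff)
      with w show False by simp
    qed
  qed
  have g3: "\<forall>p\<in>(\<lambda>w. (w, 0::complex)) ` K71. gg C71 p \<noteq> 0"
    by (auto simp: gg_def)
  obtain M1 where M1: "M1 > 0" "\<forall>p\<in>(\<lambda>w. (w, 0::complex)) ` K41. cmod (ff \<alpha> C41 p) < M1 * cmod (gg C41 p)"
    using nbhd_bound[OF c1 cont_ff cont_gg g1] by blast
  obtain M2 where M2: "M2 > 0" "\<forall>p\<in>(\<lambda>w. (0::complex, w)) ` K42. cmod (ff \<alpha> C42 p) < M2 * cmod (gg C42 p)"
    using nbhd_bound[OF c2 cont_ff cont_gg g2] by blast
  obtain M3 where M3: "M3 > 0" "\<forall>p\<in>(\<lambda>w. (w, 0::complex)) ` K71. cmod (ff \<alpha> C71 p) < M3 * cmod (gg C71 p)"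
    using nbhd_bound[OF c3 cont_ff cont_gg g3] by blast
  define V where "V c M = {p. p \<in> okdom c \<and> cmod (ff \<alpha> c p) < M * cmod (gg c p)}" for c M
  have in1: "{(w,0) | w. w \<in> K41} \<subseteq> V C41 M1" using M1(2) k(2) by (auto simp: V_def)
  have in2: "{(0,w) | w. w \<in> K42} \<subseteq> V C42 M2" using M2(2) k(4) by (auto simp: V_def)
  have in3: "{(w,0) | w. w \<in> K71} \<subseteq> V C71 M3" using M3(2) by (auto simp: V_def)
  have op: "open (V c M)" for c M unfolding V_def by (rule open_V)
  have sub: "V c M \<subseteq> okdom c" for c M by (auto simp: V_def)
  define C where "C = 1 + (M1 + M2 + M3) / 8"
  have bd: "cmod (3*z*BP_Edot \<alpha> z u v / (4 * BP_E u v)) \<le> C"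
    if z: "z \<noteq> 0" and uv: "(u,v) \<in> gen_pts C41 (V C41 M1) \<union> gen_pts C42 (V C42 M2) \<union> gen_pts C71 (V C71 M3)" for z u v
  proof -
    from uv consider "(u,v) \<in> gen_pts C41 (V C41 M1)" | "(u,v) \<in> gen_pts C42 (V C42 M2)" | "(u,v) \<in> gen_pts C71 (V C71 M3)"
      by blast
    then show ?thesis
    proof cases
      case 1
      then have "(u,v) \<in> gen_pts C41 {p. p \<in> okdom C41 \<and> cmod (ff \<alpha> C41 p) < M1 * cmod (gg C41 p)}"
        unfolding V_def .
      from gen_bound[OF M1(1) z this] have "cmod (3*z*BP_Edot \<alpha> z u v / (4 * BP_E u v)) \<le> 1 + M1/8" .
      moreover have "1 + M1/8 \<le> C" using M1(1) M2(1) M3(1) unfolding C_def by (intro add_left_mono divide_right_mono) auto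
      ultimately show ?thesis by (rule order_trans)
    next
      case 2
      then have "(u,v) \<in> gen_pts C42 {p. p \<in> okdom C42 \<and> cmod (ff \<alpha> C42 p) < M2 * cmod (gg C42 p)}"
        unfolding V_def .
      from gen_bound[OF M2(1) z this] have "cmod (3*z*BP_Edot \<alpha> z u v / (4 * BP_E u v)) \<le> 1 + M2/8" .
      moreover have "1 + M2/8 \<le> C" using M1(1) M2(1) M3(1) unfolding C_def by (intro add_left_mono divide_right_mono) auto
      ultimately show ?thesis by (rule order_trans)
    next
      case 3
      then have "(u,v) \<in> gen_pts C71 {p. p \<in> okdom C71 \<and> cmod (ff \<alpha> C71 p) < M3 * cmod (gg C71 p)}"
        unfolding V_def .
      from gen_bound[OF M3(1) z this] have "cmod (3*z*BP_Edot \<alpha> z u v / (4 * BP_E u v)) \<le> 1 + M3/8" .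
      moreover have "1 + M3/8 \<le> C" using M1(1) M2(1) M3(1) unfolding C_def by (intro add_left_mono divide_right_mono) auto
      ultimately show ?thesis by (rule order_trans)
    qed
  qed
  have "(M1 + M2 + M3) / 8 > 0" using M1(1) M2(1) M3(1) by simp
  then have Cpos: "C > 0" unfolding C_def by linarith
  show ?thesis
    apply (rule exI[of _ "V C41 M1"], rule exI[of _ "V C42 M2"], rule exI[of _ "V C71 M3"], rule exI[of _ C])
    using op sub in1 in2 in3 Cpos bd by blast
qed


theorem lemma1:
  fixes \<alpha> :: complex
  shows
  "(\<forall>\<epsilon>>0. \<exists>U :: okchart \<Rightarrow> ((complex \<times> complex) \<times> complex) set.
      (\<forall>c. open (U c) \<and> U c \<subseteq> okdom c \<times> (- {0}) \<and> I3_piece c \<times> (- {0}) \<subseteq> U c) \<and>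
      (\<forall>c p z u v. (p, z) \<in> U c \<longrightarrow> chart_uv c p = Some (u, v) \<longrightarrow> BP_E u v \<noteq> 0 \<longrightarrow>
          cmod (BP_r \<alpha> z u v) < \<epsilon>))
   \<and>
   (\<forall>K41 K42 K71 :: complex set.
      compact K41 \<and> K41 \<subseteq> - {-1/4} \<and> compact K42 \<and> K42 \<subseteq> - {-4} \<and> compact K71 \<longrightarrow>
      (\<exists>V41 V42 V71 (C::real).
          open V41 \<and> V41 \<subseteq> okdom C41 \<and> {(w,0) | w. w \<in> K41} \<subseteq> V41 \<and>
          open V42 \<and> V42 \<subseteq> okdom C42 \<and> {(0,w) | w. w \<in> K42} \<subseteq> V42 \<and>
          open V71 \<and> V71 \<subseteq> okdom C71 \<and> {(w,0) | w. w \<in> K71} \<subseteq> V71 \<and>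
          C > 0 \<and>
          (\<forall>z. z \<noteq> 0 \<longrightarrow>
             (\<forall>(u,v) \<in> gen_pts C41 V41 \<union> gen_pts C42 V42 \<union> gen_pts C71 V71.
                cmod (3*z*BP_Edot \<alpha> z u v / (4 * BP_E u v)) \<le> C))))"
  using part1[of _ \<alpha>] part2[of _ _ _ \<alpha>] by blast

end
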